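(* Let $b,c>0$ and let $x_1,x_2,\dots\in\mathbb{R}^d$ satisfy $\|x_t\|^2\le X^2$ for all $t$. Define $D_1=bI+x_1x_1^\top$ and $D_t=\big(D_{t-1}^{-1}+c^{-1}I\big)^{-1}+x_tx_t^\top$ for $t\ge2$. Then for every $t\ge1$ all eigenvalues of $D_t$ satisfy \[ \max_i\lambda_i(D_t)\le\max\Big\{\frac{3X^2+\sqrt{X^4+4X^2c}}{2},\ b+X^2\Big\}. \] *)

theory Defs
  imports "HOL-Analysis.Analysis"
begin

text \<open>Real eigenvalue of a square real matrix (all eigenvalues of the symmetric
  matrices considered here are real).\<close>
definition is_eigenvalue :: "real^'n^'n \<Rightarrow> real \<Rightarrow> bool" where
  "is_eigenvalue A l \<longleftrightarrow> (\<exists>v. v \<noteq> 0 \<and> A *v v = l *\<^sub>R v)"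

definition outer :: "real^'n \<Rightarrow> real^'n^'n" where
  "outer x = (\<chi> i j. x $ i * x $ j)"

text \<open>The sequence D_t, indexed from t = 1 (the value at 0 is irrelevant).\<close>
fun Dseq :: "real \<Rightarrow> real \<Rightarrow> (nat \<Rightarrow> real^'n) \<Rightarrow> nat \<Rightarrow> real^'n^'n" where
  "Dseq b c x 0 = mat 0"
| "Dseq b c x (Suc 0) = mat b + outer (x 1)"
| "Dseq b c x (Suc (Suc t)) =
     matrix_inv (matrix_inv (Dseq b c x (Suc t)) + mat (1 / c)) + outer (x (Suc (Suc t)))"

end

theory Submission
  imports Defs
begin

lemma mat_mv: "mat k *v (v::real^'n) = k *\<^sub>R v"
proof -
  have "mat k *v v = matrix ((*\<^sub>R) k) *v v" by (simp add: matrix_scaleR)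
  also have "\<dots> = k *\<^sub>R v" by (simp add: matrix_works linear_scaleR)
  finally show ?thesis .
qed

lemma outer_mv: "outer x *v (v::real^'n) = (x \<bullet> v) *\<^sub>R x"
  by (simp add: vec_eq_iff matrix_vector_mult_def outer_def inner_vec_def sum_distrib_left mult_ac)

definition symf :: "real^'n^'n \<Rightarrow> bool" where
  "symf A \<longleftrightarrow> (\<forall>u w. u \<bullet> (A *v w) = (A *v u) \<bullet> w)"

definition pdf :: "real^'n^'n \<Rightarrow> bool" where
  "pdf A \<longleftrightarrow> (\<forall>v. v \<noteq> 0 \<longrightarrow> v \<bullet> (A *v v) > 0)"

lemma pdf_psd: "pdf A \<Longrightarrow> v \<bullet> (A *v v) \<ge> 0"
  unfolding pdf_def by (cases "v = 0") (auto intro: less_imp_le)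

lemma symf_mat: "symf (mat k)"
  by (simp add: symf_def mat_mv)

lemma symf_outer: "symf (outer x)"
  by (simp add: symf_def outer_mv inner_commute)

lemma symf_add: "symf A \<Longrightarrow> symf B \<Longrightarrow> symf (A + B)"
  by (simp add: symf_def matrix_vector_mult_add_rdistrib inner_add_left inner_add_right)

lemma inv_props:
  fixes A :: "real^'n^'n"
  assumes "invertible A"
  shows "A *v (matrix_inv A *v v) = v" "matrix_inv A *v (A *v v) = v"
proof -
  have "A ** matrix_inv A = mat 1 \<and> matrix_inv A ** A = mat 1"
    using assms unfolding invertible_def matrix_inv_def by (rule someI_ex)
  then show "A *v (matrix_inv A *v v) = v" "matrix_inv A *v (A *v v) = v"
    by (simp_all add: matrix_vector_mul_assoc)
qed

lemma pdf_invertible: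
  fixes A :: "real^'n^'n"
  assumes "pdf A" shows "invertible A"
proof -
  have "\<forall>x. A *v x = 0 \<longrightarrow> x = 0"
    using assms unfolding pdf_def by (metis inner_zero_right less_irrefl)
  then show ?thesis
    by (simp add: invertible_left_inverse matrix_left_invertible_ker)
qed

lemma symf_inv:
  fixes A :: "real^'n^'n"
  assumes "symf A" "invertible A" shows "symf (matrix_inv A)"
  unfolding symf_def
proof (intro allI)
  fix u w
  define p where "p = matrix_inv A *v u"
  define q where "q = matrix_inv A *v w"
  have u: "u = A *v p" and w: "w = A *v q" using inv_props[OF assms(2)] by (simp_all add: p_def q_def)
  show "u \<bullet> (matrix_inv A *v w) = (matrix_inv A *v u) \<bullet> w"
    using assms(1) unfolding symf_def u w inv_props[OF assms(2)] by simp
qed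

lemma cs_form:
  fixes D :: "real^'n^'n"
  assumes "symf D" "pdf D" "w \<noteq> 0"
  shows "(v \<bullet> (D *v w))^2 \<le> (v \<bullet> (D *v v)) * (w \<bullet> (D *v w))"
proof -
  define a where "a = v \<bullet> (D *v v)"
  define bb where "bb = v \<bullet> (D *v w)"
  define cc where "cc = w \<bullet> (D *v w)"
  have cpos: "cc > 0" using assms(2,3) unfolding pdf_def cc_def by auto
  define s where "s = bb / cc"
  have "0 \<le> (v - s *\<^sub>R w) \<bullet> (D *v (v - s *\<^sub>R w))" by (rule pdf_psd[OF assms(2)])
  also have "\<dots> = a - 2 * s * bb + s^2 * cc"
  proof -
    have "w \<bullet> (D *v v) = bb" using assms(1) unfolding symf_def bb_def by (metis inner_commute)
    then show ?thesis
      by (simp add: matrix_vector_mult_diff_distrib matrix_scaleR_vector_ac[symmetric] inner_diff_left inner_diff_right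
          a_def bb_def cc_def algebra_simps power2_eq_square)
  qed
  also have "\<dots> = a - bb^2 / cc" using cpos by (simp add: s_def field_simps power2_eq_square)
  finally have "bb^2 / cc \<le> a" by simp
  then show ?thesis using cpos by (simp add: a_def bb_def cc_def field_simps)
qed

lemma lemmaL:
  fixes D :: "real^'n^'n"
  assumes "symf D" "pdf D" "\<And>v. v \<bullet> (D *v v) \<le> M * (v \<bullet> v)"
  shows "v \<bullet> v \<le> M * (v \<bullet> (matrix_inv D *v v))"
proof (cases "v = 0")
  case True then show ?thesis by simp
next
  case False
  have inv: "invertible D" using pdf_invertible[OF assms(2)] .
  define w where "w = matrix_inv D *v v"
  have Dw: "D *v w = v" using inv_props[OF inv] by (simp add: w_def)
  have wne: "w \<noteq> 0" using Dw False by auto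
  have cs: "(v \<bullet> v)^2 \<le> (v \<bullet> (D *v v)) * (w \<bullet> v)"
    using cs_form[OF assms(1,2) wne, of v] by (simp add: Dw)
  have c: "w \<bullet> v > 0" using assms(2) wne Dw unfolding pdf_def by metis
  have b: "v \<bullet> v > 0" using False by simp
  have "(v \<bullet> v)^2 \<le> M * (v \<bullet> v) * (w \<bullet> v)"
    using cs assms(3)[of v] c by (meson mult_right_mono less_imp_le order_trans)
  then have "v \<bullet> v \<le> M * (w \<bullet> v)" using b by (simp add: power2_eq_square mult.assoc)
  then show ?thesis by (simp add: w_def inner_commute)
qed

lemma lemmaU:
  fixes A :: "real^'n^'n"
  assumes "\<And>v. \<alpha> * (v \<bullet> v) \<le> v \<bullet> (A *v v)" "\<alpha> > 0"
  shows "invertible A" "\<alpha> * (v \<bullet> (matrix_inv A *v v)) \<le> v \<bullet> v" "pdf (matrix_inv A)"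
proof -
  have pd: "pdf A" unfolding pdf_def
  proof (intro allI impI)
    fix v :: "real^'n" assume "v \<noteq> 0"
    then have "\<alpha> * (v \<bullet> v) > 0" using assms(2) by simp
    then show "v \<bullet> (A *v v) > 0" using assms(1)[of v] by linarith
  qed
  show inv: "invertible A" by (rule pdf_invertible[OF pd])
  have key: "\<alpha> * (w \<bullet> w) \<le> (A *v w) \<bullet> w" for w
    using assms(1)[of w] by (simp add: inner_commute)
  {
    fix v :: "real^'n"
    define w where "w = matrix_inv A *v v"
    have Aw: "A *v w = v" using inv_props[OF inv] by (simp add: w_def)
    have k: "\<alpha> * (norm w)^2 \<le> v \<bullet> w" using key[of w] by (simp add: Aw power2_norm_eq_inner)
    have cs: "v \<bullet> w \<le> norm v * norm w" by (rule norm_cauchy_schwarz)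
    have "\<alpha> * norm w \<le> norm v"
    proof (cases "w = 0")
      case True then show ?thesis by simp
    next
      case False
      then have "norm w > 0" by simp
      moreover have "(\<alpha> * norm w) * norm w \<le> norm v * norm w" using k cs by (simp add: power2_eq_square mult_ac)
      ultimately show ?thesis by simp
    qed
    then have "\<alpha> * (v \<bullet> w) \<le> norm v * norm v"
      using cs assms(2) by (smt (verit, best) mult_left_mono mult_right_mono norm_ge_zero mult.assoc mult.commute)
    then have "\<alpha> * (v \<bullet> (matrix_inv A *v v)) \<le> v \<bullet> v"
      by (simp add: w_def power2_norm_eq_inner[symmetric] power2_eq_square)
    note this k Aw
  } note * = this
  show "\<alpha> * (v \<bullet> (matrix_inv A *v v)) \<le> v \<bullet> v" using *(1) .
  show "pdf (matrix_inv A)" unfolding pdf_def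
  proof (intro allI impI)
    fix v :: "real^'n" assume v: "v \<noteq> 0"
    have "matrix_inv A *v v \<noteq> 0" using *(3)[of v] v by auto
    then have "\<alpha> * (norm (matrix_inv A *v v))^2 > 0" using assms(2) by simp
    then show "v \<bullet> (matrix_inv A *v v) > 0" using *(2)[of v] by linarith
  qed
qed

lemma arith_bound:
  fixes M X c :: real
  assumes "c > 0" "M > 0" "M \<ge> (3 * X^2 + sqrt (X^4 + 4 * X^2 * c)) / 2"
  shows "M * c / (M + c) + X^2 \<le> M"
proof -
  define s where "s = sqrt (X^4 + 4 * X^2 * c)"
  have nn: "0 \<le> X^4 + 4 * X^2 * c"
  proof -
    have "0 \<le> X^4" using zero_le_even_power[of 4 X] by simp
    moreover have "0 \<le> 4 * X^2 * c" using assms(1) by (intro mult_nonneg_nonneg) auto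
    ultimately show "0 \<le> X^4 + 4 * X^2 * c" by (rule add_nonneg_nonneg)
  qed
  have s2: "s^2 = X^4 + 4 * X^2 * c" unfolding s_def using nn by (rule real_sqrt_pow2)
  have s0: "s \<ge> 0" unfolding s_def using nn by simp
  have sX: "s \<ge> X^2"
  proof (rule power2_le_imp_le[OF _ s0])
    have "(X^2)^2 = X^4" by (simp add: power4_eq_xxxx power2_eq_square)
    moreover have "0 \<le> 4 * X^2 * c" using assms(1) by (intro mult_nonneg_nonneg) auto
    ultimately show "(X^2)^2 \<le> s^2" using s2 by linarith
  qed
  have M0': "(X^2 + s) / 2 \<le> (3 * X^2 + s) / 2" using zero_le_power2[of X] by (simp add: divide_right_mono)
  have M0: "M \<ge> (X^2 + s) / 2" using M0' assms(3) unfolding s_def[symmetric] by linarith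
  have "M^2 - X^2 * M - X^2 * c = (M - (X^2 + s)/2) * (M - (X^2 - s)/2)"
  proof -
    have "(M - (X^2 + s)/2) * (M - (X^2 - s)/2) = M^2 - X^2 * M + ((X^2)^2 - s^2)/4"
      by (simp add: field_simps power2_eq_square)
    also have "(X^2)^2 = X^4" by (simp add: power4_eq_xxxx power2_eq_square)
    finally show ?thesis using s2 by simp
  qed
  also have "\<dots> \<ge> 0" using M0 sX s0 by (intro mult_nonneg_nonneg) auto
  finally have "X^2 * M + X^2 * c \<le> M * M" by (simp add: power2_eq_square)
  then show ?thesis using assms(1,2) by (simp add: field_simps)
qed

theorem lemma7:
  fixes b c X :: real and x :: "nat \<Rightarrow> real^'n"
  assumes "b > 0" and "c > 0"
    and "\<And>t. t \<ge> 1 \<Longrightarrow> norm (x t) ^ 2 \<le> X ^ 2"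
  shows "\<And>t l. t \<ge> 1 \<Longrightarrow> is_eigenvalue (Dseq b c x t) l \<Longrightarrow>
           l \<le> max ((3 * X^2 + sqrt (X^4 + 4 * X^2 * c)) / 2) (b + X^2)"
proof -
  define M where "M = max ((3 * X^2 + sqrt (X^4 + 4 * X^2 * c)) / 2) (b + X^2)"
  have Mpos: "M > 0" using assms(1) unfolding M_def by (smt (verit) zero_le_power2)
  have Mb: "b + X^2 \<le> M" unfolding M_def by simp
  have Mr: "(3 * X^2 + sqrt (X^4 + 4 * X^2 * c)) / 2 \<le> M" unfolding M_def by simp
  have outer_q: "v \<bullet> (outer (x t) *v v) = (x t \<bullet> v)^2" for v t
    by (simp add: outer_mv power2_eq_square inner_commute)
  have outer_le: "(x t \<bullet> v)^2 \<le> X^2 * (v \<bullet> v)" if "t \<ge> 1" for v t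
  proof -
    have "(x t \<bullet> v)^2 \<le> (norm (x t) * norm v)^2"
      by (metis Cauchy_Schwarz_ineq2 abs_ge_zero power_mono real_sqrt_abs real_sqrt_le_iff norm_ge_zero abs_le_iff power2_abs)
    also have "\<dots> = norm (x t)^2 * (v \<bullet> v)" by (simp add: power_mult_distrib power2_norm_eq_inner)
    also have "\<dots> \<le> X^2 * (v \<bullet> v)" using assms(3)[OF that] by (simp add: mult_right_mono)
    finally show ?thesis .
  qed
  have inv: "symf (Dseq b c x (Suc t)) \<and> pdf (Dseq b c x (Suc t)) \<and>
      (\<forall>v. v \<bullet> (Dseq b c x (Suc t) *v v) \<le> M * (v \<bullet> v))" for t
  proof (induction t)
    case 0
    have q: "v \<bullet> (Dseq b c x (Suc 0) *v v) = b * (v \<bullet> v) + (x 1 \<bullet> v)^2" for v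
      by (simp add: matrix_vector_mult_add_rdistrib inner_add_right mat_mv outer_q)
    show ?case
    proof (intro conjI allI)
      show "symf (Dseq b c x (Suc 0))" by (simp add: symf_add symf_mat symf_outer)
      show "pdf (Dseq b c x (Suc 0))" unfolding pdf_def q
        using assms(1) by (auto intro: add_pos_nonneg)
      fix v :: "real^'n"
      have "b * (v \<bullet> v) + (x 1 \<bullet> v)^2 \<le> b * (v \<bullet> v) + X^2 * (v \<bullet> v)" using outer_le[of 1 v] by simp
      also have "\<dots> \<le> M * (v \<bullet> v)" using Mb by (simp add: distrib_right[symmetric] mult_right_mono)
      finally show "v \<bullet> (Dseq b c x (Suc 0) *v v) \<le> M * (v \<bullet> v)" unfolding q .
    qed
  next
    case (Suc t)
    define D where "D = Dseq b c x (Suc t)"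
    have sD: "symf D" and pD: "pdf D" and uD: "\<And>v. v \<bullet> (D *v v) \<le> M * (v \<bullet> v)"
      using Suc unfolding D_def by auto
    have iD: "invertible D" by (rule pdf_invertible[OF pD])
    define A where "A = matrix_inv D + mat (1/c)"
    define \<alpha> where "\<alpha> = 1/M + 1/c"
    have apos: "\<alpha> > 0" using Mpos assms(2) unfolding \<alpha>_def by (intro add_pos_pos) simp_all
    have lA: "\<alpha> * (v \<bullet> v) \<le> v \<bullet> (A *v v)" for v
    proof -
      have "v \<bullet> v \<le> M * (v \<bullet> (matrix_inv D *v v))" by (rule lemmaL[OF sD pD uD])
      then have "(1/M) * (v \<bullet> v) \<le> v \<bullet> (matrix_inv D *v v)" using Mpos by (simp add: field_simps)
      then show ?thesis
        by (simp add: A_def \<alpha>_def matrix_vector_mult_add_rdistrib inner_add_right mat_mv distrib_right)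
    qed
    note U = lemmaU[OF lA apos]
    have sA: "symf A" unfolding A_def by (intro symf_add symf_inv sD iD symf_mat)
    have sAi: "symf (matrix_inv A)" by (rule symf_inv[OF sA U(1)])
    define x' where "x' = x (Suc (Suc t))"
    have E: "Dseq b c x (Suc (Suc t)) = matrix_inv A + outer x'"
      by (simp add: A_def D_def x'_def)
    have q: "v \<bullet> (Dseq b c x (Suc (Suc t)) *v v) = v \<bullet> (matrix_inv A *v v) + (x' \<bullet> v)^2" for v
      unfolding E by (simp add: matrix_vector_mult_add_rdistrib inner_add_right x'_def outer_q)
    show ?case
    proof (intro conjI allI)
      show "symf (Dseq b c x (Suc (Suc t)))" unfolding E by (intro symf_add sAi symf_outer)
      show "pdf (Dseq b c x (Suc (Suc t)))" unfolding pdf_def q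
        using U(3) unfolding pdf_def by (auto intro: add_pos_nonneg)
      fix v :: "real^'n"
      have h1: "v \<bullet> (matrix_inv A *v v) \<le> (1/\<alpha>) * (v \<bullet> v)"
        using U(2)[of v] apos by (simp add: field_simps)
      have h2: "(x' \<bullet> v)^2 \<le> X^2 * (v \<bullet> v)" unfolding x'_def by (rule outer_le) simp
      have ar: "1/\<alpha> + X^2 \<le> M"
      proof -
        have "1/\<alpha> = M * c / (M + c)" using Mpos assms(2) by (simp add: \<alpha>_def field_simps)
        then show ?thesis using arith_bound[OF assms(2) Mpos Mr] by simp
      qed
      have "v \<bullet> (matrix_inv A *v v) + (x' \<bullet> v)^2 \<le> (1/\<alpha> + X^2) * (v \<bullet> v)"
        using h1 h2 by (simp add: distrib_right)
      also have "\<dots> \<le> M * (v \<bullet> v)" using ar by (simp add: mult_right_mono)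
      finally show "v \<bullet> (Dseq b c x (Suc (Suc t)) *v v) \<le> M * (v \<bullet> v)" unfolding q .
    qed
  qed
  fix t l assume t: "t \<ge> 1" and ev: "is_eigenvalue (Dseq b c x t) l"
  obtain t' where t': "t = Suc t'" using t by (cases t) auto
  obtain v where v: "v \<noteq> 0" "Dseq b c x t *v v = l *\<^sub>R v" using ev unfolding is_eigenvalue_def by blast
  have "l * (v \<bullet> v) \<le> M * (v \<bullet> v)" using inv[of t'] v(2) t' by (metis inner_scaleR_right)
  moreover have "v \<bullet> v > 0" using v(1) by simp
  ultimately show "l \<le> max ((3 * X^2 + sqrt (X^4 + 4 * X^2 * c)) / 2) (b + X^2)"
    unfolding M_def[symmetric] by simp
qed

end
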